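(* Let $\alpha\in\mathbb R$, $\gamma,\delta\ge0$, $h>0$, $\tau>0$, and consider the Compact6 method with forward Euler time stepping applied to the linear equation $u_t+\alpha u_x=\gamma u_{xx}+\delta u_{xxt}$, whose amplification factor for the Fourier mode with phase $\theta$ is \[ \mathcal{L}(\theta)=\frac{\Big(1+\dfrac{\gamma\tau-\delta}{2h^2}P\Big)-\dfrac{i\alpha\tau}{6h}Q}{1-\dfrac{\delta}{2h^2}P},\qquad P=\frac{48\cos\theta+3\cos 2\theta-51}{11+4\cos\theta},\quad Q=\frac{28\sin\theta+\sin 2\theta}{3+2\cos\theta}. \] The method is stable, in the sense that $|\mathcal{L}(\theta)|^2\le 1+2C\tau$, if there exists a constant $C>0$ such that \[ \tau\le\frac{2\Big(1-\dfrac{\delta P}{2h^2}\Big)\Big(C-\dfrac{C\delta P}{2h^2}-\dfrac{\gamma P}{2h^2}\Big)}{\dfrac{\gamma^2P^2}{4h^4}+\dfrac{\alpha^2Q^2}{36h^2}}. \]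
   Context: The Compact6 method approximates $u_x$ and $u_{xx}$ at grid points $x_j$ (spacing $h$) by the sixth-order compact schemes $\tfrac13u'_{j-1}+u'_j+\tfrac13u'_{j+1}=\tfrac1h(-\tfrac1{36}u_{j-2}-\tfrac79u_{j-1}+\tfrac79u_{j+1}+\tfrac1{36}u_{j+2})$ and $\tfrac2{11}u''_{j-1}+u''_j+\tfrac2{11}u''_{j+1}=\tfrac1{h^2}(\tfrac3{44}u_{j-2}+\tfrac{12}{11}u_{j-1}-\tfrac{51}{22}u_j+\tfrac{12}{11}u_{j+1}+\tfrac3{44}u_{j+2})$, and time is discretized by forward Euler with step $\tau$, giving $u^{n+1}_j=\mathcal L(\theta)u^n_j$ for a Fourier mode $u_j=\hat u e^{ij\theta}$, $\theta=\omega h$. Stability (relaxed von Neumann) means $|\mathcal L(\theta)|\le 1+C\tau$, taken here in the form $|\mathcal L(\theta)|^2\le 1+2C\tau$. *)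

theory Defs
  imports Complex_Main
begin

definition compact6_P :: "real \<Rightarrow> real" where
  "compact6_P \<theta> = (48 * cos \<theta> + 3 * cos (2 * \<theta>) - 51) / (11 + 4 * cos \<theta>)"

definition compact6_Q :: "real \<Rightarrow> real" where
  "compact6_Q \<theta> = (28 * sin \<theta> + sin (2 * \<theta>)) / (3 + 2 * cos \<theta>)"

definition compact6_L :: "real \<Rightarrow> real \<Rightarrow> real \<Rightarrow> real \<Rightarrow> real \<Rightarrow> real \<Rightarrow> complex" where
  "compact6_L \<alpha> \<gamma> \<delta> h \<tau> \<theta> =
     (complex_of_real (1 + (\<gamma> * \<tau> - \<delta>) / (2 * h^2) * compact6_P \<theta>)
      - \<i> * complex_of_real (\<alpha> * \<tau> / (6 * h) * compact6_Q \<theta>))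
     / complex_of_real (1 - \<delta> / (2 * h^2) * compact6_P \<theta>)"

end

theory Submission
  imports Defs
begin

lemma P_nonpos: "compact6_P t \<le> 0"
proof -
  have c: "cos (2*t) = 2 * (cos t)^2 - 1" by (simp add: cos_double_cos)
  have "48 * cos t + 3 * cos (2 * t) - 51 = 6 * (cos t - 1) * (cos t + 9)"
    unfolding c by (simp add: algebra_simps power2_eq_square)
  moreover have "6 * (cos t - 1) * (cos t + 9) \<le> 0"
  proof -
    have "6 * (cos t - 1) \<le> 0" using cos_le_one[of t] by simp
    moreover have "cos t + 9 \<ge> 0" using cos_ge_minus_one[of t] by linarith
    ultimately show ?thesis by (rule mult_nonpos_nonneg)
  qed
  moreover have "11 + 4 * cos t > 0" using cos_ge_minus_one[of t] by linarith
  ultimately show ?thesis unfolding compact6_P_def by (simp add: divide_nonpos_pos)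
qed

lemma cmod_sq: "(cmod ((complex_of_real x - \<i> * complex_of_real y) / complex_of_real z))^2
   = (x^2 + y^2) / z^2"
proof -
  have "complex_of_real x - \<i> * complex_of_real y = Complex x (-y)"
    by (simp add: complex_eq_iff)
  then show ?thesis
    by (simp add: norm_divide power_divide cmod_def add_divide_distrib)
qed

theorem theorem3:
  fixes \<alpha> \<gamma> \<delta> h \<tau> C :: real
  assumes "\<gamma> \<ge> 0" and "\<delta> \<ge> 0" and "h > 0" and "\<tau> > 0" and "C > 0"
    and bound: "\<forall>\<theta>::real.
      let P = compact6_P \<theta>; Q = compact6_Q \<theta>;
          D = \<gamma>^2 * P^2 / (4 * h^4) + \<alpha>^2 * Q^2 / (36 * h^2)
      in D \<noteq> 0 \<longrightarrow>
         \<tau> \<le> 2 * (1 - \<delta> * P / (2 * h^2)) * (C - C * \<delta> * P / (2 * h^2) - \<gamma> * P / (2 * h^2)) / D"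
  shows "\<forall>\<theta>::real. (cmod (compact6_L \<alpha> \<gamma> \<delta> h \<tau> \<theta>))^2 \<le> 1 + 2 * C * \<tau>"
proof
  fix t :: real
  define P where "P = compact6_P t"
  define Q where "Q = compact6_Q t"
  define a where "a = \<gamma> / (2*h^2)"
  define d where "d = \<delta> / (2*h^2)"
  define b where "b = \<alpha> / (6*h)"
  define B where "B = 1 - d * P"
  define D where "D = a^2 * P^2 + b^2 * Q^2"
  have P0: "P \<le> 0" using P_nonpos P_def by simp
  have a0: "a \<ge> 0" and d0: "d \<ge> 0" using assms by (auto simp: a_def d_def)
  have B1: "B \<ge> 1" using P0 d0 by (simp add: B_def mult_nonneg_nonpos)
  have aP: "a * P \<le> 0" using a0 P0 by (simp add: mult_nonneg_nonpos)
  have D0: "D \<ge> 0" by (simp add: D_def)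
  have Deq: "D = \<gamma>^2 * P^2 / (4 * h^4) + \<alpha>^2 * Q^2 / (36 * h^2)"
    using assms(3) by (simp add: D_def a_def b_def power_divide power_mult_distrib field_simps)
  have key: "\<tau> * D \<le> 2 * B * (C * B - a * P)"
  proof (cases "D = 0")
    case True
    have "0 \<le> C * B - a * P" using B1 assms(5) aP by (smt (verit) mult_pos_pos)
    then show ?thesis using True B1 by simp
  next
    case False
    with D0 have Dp: "D > 0" by simp
    have "\<tau> \<le> 2 * (1 - \<delta> * P / (2 * h^2)) * (C - C * \<delta> * P / (2 * h^2) - \<gamma> * P / (2 * h^2)) / D"
      using bound[rule_format, of t] False unfolding Deq[symmetric] Let_def P_def[symmetric] Q_def[symmetric]
      by (simp add: Deq)
    also have "\<dots> = 2 * B * (C * B - a * P) / D"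
      by (simp add: B_def a_def d_def algebra_simps)
    finally show ?thesis using Dp by (simp add: pos_le_divide_eq mult.commute)
  qed
  have L: "compact6_L \<alpha> \<gamma> \<delta> h \<tau> t =
     (complex_of_real (B + a * \<tau> * P) - \<i> * complex_of_real (b * \<tau> * Q)) / complex_of_real B"
    unfolding compact6_L_def P_def[symmetric] Q_def[symmetric]
    by (simp add: B_def a_def d_def b_def algebra_simps diff_divide_distrib)
  have "(cmod (compact6_L \<alpha> \<gamma> \<delta> h \<tau> t))^2 = ((B + a*\<tau>*P)^2 + (b*\<tau>*Q)^2) / B^2"
    unfolding L cmod_sq ..
  also have "\<dots> \<le> 1 + 2 * C * \<tau>"
  proof -
    have "(B + a*\<tau>*P)^2 + (b*\<tau>*Q)^2 = B^2 + \<tau> * (2*B*a*P + \<tau> * D)"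
      by (simp add: D_def power2_eq_square algebra_simps)
    also have "\<dots> \<le> B^2 + \<tau> * (2*C*B^2)"
      using key assms(4) by (intro add_left_mono mult_left_mono) (auto simp: power2_eq_square algebra_simps)
    also have "\<dots> = (1 + 2*C*\<tau>) * B^2" by (simp add: algebra_simps)
    finally show ?thesis using B1 by (simp add: pos_divide_le_eq)
  qed
  finally show "(cmod (compact6_L \<alpha> \<gamma> \<delta> h \<tau> t))^2 \<le> 1 + 2 * C * \<tau>" .
qed

end
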